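(* Fix $\epsilon,\phi\in\mathbb R$ with $|\epsilon|>1$ and $\phi\ne\epsilon$. For each $n$, let $(\mu_n,\mathbf x_n)$ be an eigenpair of $T_{n,\epsilon,\phi}$ with $\|\mathbf x_n\|_2=1$, and suppose $\mu_n\to\epsilon+\epsilon^{-1}$ as $n\to\infty$. Then: 1. Eventually, $\mu_n$ is an outlier of $T_{n,\epsilon,\phi}$, and there is a constant $c>0$ independent of $n$ such that eventually every eigenvalue $\lambda_n\ne\mu_n$ of $T_{n,\epsilon,\phi}$ satisfies $|\lambda_n-(\epsilon+\epsilon^{-1})|\ge c$. 2. $\|\mathbf x_n-P_{\mathbf v_n}\mathbf x_n\|_2\to0$ as $n\to\infty$, where $\mathbf v_n=[1,\epsilon^{-1},\ldots,\epsilon^{-n+1}]^\top$.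
   Context: For $n\ge2$ and real parameters $\epsilon,\phi$, $T_{n,\epsilon,\phi}$ is the real symmetric tridiagonal $n\times n$ matrix with diagonal entries $(\epsilon,0,\ldots,0,\phi)$ and all sub- and super-diagonal entries equal to $1$. An outlier is an eigenvalue not in $[-2,2]$. For $\mathbf u\in\mathbb R^n\setminus\{0\}$, $P_{\mathbf u}$ denotes the orthogonal projector onto $\mathrm{span}\{\mathbf u\}$: $P_{\mathbf u}\mathbf x=\frac{\mathbf x^\top\mathbf u}{\mathbf u^\top\mathbf u}\mathbf u$. *)

theory Defs
  imports Complex_Main "Jordan_Normal_Form.Char_Poly"
begin

text \<open>The tridiagonal matrix T_{n,eps,phi}: diagonal (eps,0,...,0,phi), off-diagonals 1.
  Indices are 0-based; intended for n >= 2.\<close>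
definition T_mat :: "nat \<Rightarrow> real \<Rightarrow> real \<Rightarrow> real mat" where
  "T_mat n eps phi = mat n n (\<lambda>(i,j).
     if i = j then (if i = 0 then eps else if i = n - 1 then phi else 0)
     else if i = j + 1 \<or> j = i + 1 then 1 else 0)"

definition outlier :: "real mat \<Rightarrow> real \<Rightarrow> bool" where
  "outlier A l \<longleftrightarrow> eigenvalue A l \<and> l \<notin> {-2..2}"

definition vnorm2 :: "real vec \<Rightarrow> real" where
  "vnorm2 x = sqrt (x \<bullet> x)"

definition proj_onto :: "real vec \<Rightarrow> real vec \<Rightarrow> real vec" where
  "proj_onto u x = ((x \<bullet> u) / (u \<bullet> u)) \<cdot>\<^sub>v u"

definition v_vec :: "nat \<Rightarrow> real \<Rightarrow> real vec" where
  "v_vec n eps = vec n (\<lambda>i. (1 / eps) ^ i)"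

end

theory Submission
  imports Defs
begin

lemma sq_ineq:
  fixes r X Y :: real
  assumes "r^2 < 1"
  shows "(r*X + Y)^2 \<le> (1+r^2)/2 * X^2 + (1+r^2)/(1-r^2) * Y^2"
proof -
  have pos: "1 - r^2 > 0" using assms by simp
  have "(1+r^2)/2 * X^2 + (1+r^2)/(1-r^2) * Y^2 - (r*X + Y)^2 = ((1-r^2)*X - 2*r*Y)^2 / (2*(1-r^2))"
    using pos by (simp add: field_simps power2_eq_square)
  moreover have "((1-r^2)*X - 2*r*Y)^2 / (2*(1-r^2)) \<ge> 0" using pos by simp
  ultimately show ?thesis by linarith
qed

lemma fwd_point:
  fixes a :: "nat \<Rightarrow> real"
  assumes "0 \<le> \<rho>" "\<rho> < 1" "0 \<le> B" "\<And>i. i < m \<Longrightarrow> (a (Suc i))^2 \<le> \<rho> * (a i)^2 + B"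
  shows "(a m)^2 \<le> \<rho>^m * (a 0)^2 + B / (1 - \<rho>)"
  using assms(4)
proof (induction m)
  case 0 then show ?case using assms by simp
next
  case (Suc m)
  have IH: "(a m)^2 \<le> \<rho>^m * (a 0)^2 + B / (1 - \<rho>)" using Suc by simp
  have "(a (Suc m))^2 \<le> \<rho> * (a m)^2 + B" using Suc by simp
  also have "\<dots> \<le> \<rho> * (\<rho>^m * (a 0)^2 + B / (1 - \<rho>)) + B"
    using IH assms(1) by (simp add: mult_left_mono)
  also have "\<dots> = \<rho>^Suc m * (a 0)^2 + B / (1 - \<rho>)"
    using assms(2) by (simp add: field_simps)
  finally show ?case .
qed

lemma fwd_sum:
  fixes a c :: "nat \<Rightarrow> real"
  assumes "0 \<le> \<rho>" "\<rho> < 1" "\<And>i. i < m \<Longrightarrow> (a (Suc i))^2 \<le> \<rho> * (a i)^2 + c i"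
  shows "(\<Sum>i\<le>m. (a i)^2) \<le> ((a 0)^2 + (\<Sum>i<m. c i)) / (1 - \<rho>)"
proof -
  have "(\<Sum>i\<le>m. (a i)^2) = (a 0)^2 + (\<Sum>i<m. (a (Suc i))^2)"
    by (cases m) (simp_all only: sum.atMost_Suc_shift lessThan_Suc_atMost, simp)
  also have "(\<Sum>i<m. (a (Suc i))^2) \<le> (\<Sum>i<m. \<rho> * (a i)^2 + c i)"
    by (rule sum_mono) (use assms(3) in auto)
  also have "\<dots> = \<rho> * (\<Sum>i<m. (a i)^2) + (\<Sum>i<m. c i)"
    by (simp add: sum.distrib sum_distrib_left)
  also have "(\<Sum>i<m. (a i)^2) \<le> (\<Sum>i\<le>m. (a i)^2)"
    by (rule sum_mono2) auto
  finally have "(\<Sum>i\<le>m. (a i)^2) \<le> (a 0)^2 + \<rho> * (\<Sum>i\<le>m. (a i)^2) + (\<Sum>i<m. c i)"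
    using assms(1) by (smt (verit) mult_left_mono)
  then show ?thesis using assms(2) by (simp add: field_simps)
qed

lemma bwd_sum:
  fixes b c :: "nat \<Rightarrow> real"
  assumes "0 \<le> \<rho>" "\<rho> < 1" "\<And>i. i < m \<Longrightarrow> (b i)^2 \<le> \<rho> * (b (Suc i))^2 + c i"
  shows "(\<Sum>i\<le>m. (b i)^2) \<le> ((b m)^2 + (\<Sum>i<m. c i)) / (1 - \<rho>)"
proof -
  have "(\<Sum>i\<le>m. (b i)^2) = (b m)^2 + (\<Sum>i<m. (b i)^2)"
    by (simp add: lessThan_Suc_atMost[symmetric] del: lessThan_Suc_atMost) 
  also have "(\<Sum>i<m. (b i)^2) \<le> (\<Sum>i<m. \<rho> * (b (Suc i))^2 + c i)"
    by (rule sum_mono) (use assms(3) in auto)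
  also have "\<dots> = \<rho> * (\<Sum>i<m. (b (Suc i))^2) + (\<Sum>i<m. c i)"
    by (simp add: sum.distrib sum_distrib_left)
  also have "(\<Sum>i<m. (b (Suc i))^2) \<le> (\<Sum>i\<le>m. (b i)^2)"
  proof -
    have "(\<Sum>i<m. (b (Suc i))^2) = (\<Sum>i\<in>Suc ` {..<m}. (b i)^2)"
      by (simp add: sum.reindex)
    also have "\<dots> \<le> (\<Sum>i\<le>m. (b i)^2)" by (rule sum_mono2) auto
    finally show ?thesis .
  qed
  finally have "(\<Sum>i\<le>m. (b i)^2) \<le> (b m)^2 + \<rho> * (\<Sum>i\<le>m. (b i)^2) + (\<Sum>i<m. c i)"
    using assms(1) by (smt (verit) mult_left_mono)
  then show ?thesis using assms(2) by (simp add: field_simps)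
qed

lemma key_fixed:
  fixes eps phi l :: real and n :: nat and y :: "nat \<Rightarrow> real"
  assumes eps: "\<bar>eps\<bar> > 1" and phi: "phi \<noteq> eps" and n: "n \<ge> 2"
    and e0: "eps * y 0 + y 1 = l * y 0"
    and mid: "\<And>i. i + 2 < n \<Longrightarrow> y i + y (i+2) = l * y (Suc i)"
    and last: "y (n-2) + phi * y (n-1) = l * y (n-1)"
  shows "(\<Sum>i<n. (y i - y 0 * (1/eps)^i)^2) \<le>
     (1+(1/eps)^2)/(1-(1/eps)^2)/(1-(1+(1/eps)^2)/2)^2 * ((phi-1/eps)^2 *
       ((((1+(1/eps)^2)/2)^(n-1)*(l-2*eps)^2 + (1+(1/eps)^2)/(1-(1/eps)^2)*(l - (eps + 1/eps))^2/(1-(1+(1/eps)^2)/2))/(phi-eps)^2)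
      + (1+(1/eps)^2)/(1-(1/eps)^2)*(1/eps)^2*(l - (eps + 1/eps))^2) * (\<Sum>i<n. (y i)^2)"
proof -
  define r where "r = 1/eps"
  define \<rho> where "\<rho> = (1 + r^2)/2"
  define K where "K = (1+r^2)/(1-r^2)"
  define \<Delta> where "\<Delta> = l - (eps + r)"
  define S where "S = (\<Sum>i<n. (y i)^2)"
  define M where "M = \<rho>^(n-1)*(l-2*eps)^2 + K*\<Delta>^2/(1-\<rho>)"
  have epsnz: "eps \<noteq> 0" using eps by auto
  have reps: "r * eps = 1" using epsnz by (simp add: r_def)
  have r2: "r^2 < 1"
  proof -
    have "\<bar>r\<bar> < 1" using eps by (simp add: r_def abs_divide divide_less_eq)
    then have "\<bar>r\<bar>^2 < 1" by (simp add: abs_square_less_1)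
    then show ?thesis by simp
  qed
  have \<rho>0: "0 \<le> \<rho>" and \<rho>1: "\<rho> < 1" using r2 by (auto simp: \<rho>_def)
  have K0: "0 \<le> K" using r2 by (simp add: K_def)
  have l_eq: "l = \<Delta> + eps + r" by (simp add: \<Delta>_def)
  define Y where "Y = y(n := phi * y (n-1))"
  have Yi: "\<And>i. i < n \<Longrightarrow> Y i = y i" by (simp add: Y_def)
  have Yn: "Y n = phi * y (n-1)" by (simp add: Y_def)
  have rec: "\<And>i. 1 \<le> i \<Longrightarrow> i < n \<Longrightarrow> Y (Suc i) = l * Y i - Y (i-1)"
  proof -
    fix i assume i1: "1 \<le> i" and il: "i < n"
    show "Y (Suc i) = l * Y i - Y (i-1)"
    proof (cases "Suc i < n")
      case True
      have "y (i-1) + y (i-1+2) = l * y (Suc (i-1))" using mid[of "i-1"] True i1 by simp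
      then show ?thesis using True i1 il Yi by simp
    next
      case False
      then have "i = n - 1" using il by simp
      then have "Suc i = n" "i - 1 = n - 2" using n by auto
      then show ?thesis using last Yn Yi il n \<open>i = n-1\<close> by (simp add: algebra_simps)
    qed
  qed
  have Y1: "Y 1 = (l - eps) * Y 0" using e0 Yi n by (simp add: algebra_simps)
  have ysq: "\<And>i. i < n \<Longrightarrow> (Y i)^2 \<le> S"
  proof -
    fix i assume "i < n"
    then have "(y i)^2 \<le> S" unfolding S_def by (intro member_le_sum) auto
    then show "(Y i)^2 \<le> S" using Yi \<open>i<n\<close> by simp
  qed
  have S0: "0 \<le> S" unfolding S_def by (intro sum_nonneg) auto
  \<comment> \<open>u: forward stable component\<close>
  define u where "u i = Y (Suc i) - eps * Y i" for i
  have u_rec: "\<And>i. 1 \<le> i \<Longrightarrow> i < n \<Longrightarrow> u i = r * u (i-1) + \<Delta> * Y i"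
  proof -
    fix i assume "1 \<le> i" "i < n"
    then have "u i = l * Y i - Y (i-1) - eps * Y i" using rec by (simp add: u_def)
    moreover have "r * u (i-1) = r * Y i - Y (i-1)"
      using \<open>1 \<le> i\<close> reps by (simp add: u_def algebra_simps)
    ultimately show "u i = r * u (i-1) + \<Delta> * Y i" by (simp add: l_eq algebra_simps)
  qed
  have "(u (n-1))^2 \<le> \<rho>^(n-1) * (u 0)^2 + K*\<Delta>^2*S / (1 - \<rho>)"
  proof (rule fwd_point[OF \<rho>0 \<rho>1])
    show "0 \<le> K*\<Delta>^2*S" using K0 S0 by simp
    fix i assume "i < n - 1"
    have "(u (Suc i))^2 = (r * u i + \<Delta> * Y (Suc i))^2" using u_rec[of "Suc i"] \<open>i < n-1\<close> by simp
    also have "\<dots> \<le> \<rho> * (u i)^2 + K * (\<Delta> * Y (Suc i))^2"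
      unfolding \<rho>_def K_def by (rule sq_ineq[OF r2])
    also have "K * (\<Delta> * Y (Suc i))^2 \<le> K*\<Delta>^2*S"
    proof -
      have "\<Delta>^2 * (Y (Suc i))^2 \<le> \<Delta>^2 * S"
        using ysq[of "Suc i"] \<open>i < n-1\<close> by (intro mult_left_mono) auto
      then show ?thesis using K0 by (simp add: power_mult_distrib mult_left_mono mult.assoc)
    qed
    finally show "(u (Suc i))^2 \<le> \<rho> * (u i)^2 + K*\<Delta>^2*S" by simp
  qed
  moreover have "(u 0)^2 \<le> (l-2*eps)^2 * S"
  proof -
    have "u 0 = (l - 2*eps) * Y 0" using Y1 by (simp add: u_def algebra_simps)
    then show ?thesis using ysq[of 0] n by (simp add: power_mult_distrib mult_left_mono)
  qed
  moreover have "u (n-1) = (phi - eps) * y (n-1)" using n Yn Yi by (simp add: u_def algebra_simps)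
  ultimately have "(phi - eps)^2 * (y (n-1))^2 \<le> \<rho>^(n-1) * ((l-2*eps)^2 * S) + K*\<Delta>^2*S / (1 - \<rho>)"
    using \<rho>0 by (smt (verit) mult_left_mono power_mult_distrib zero_le_power)
  then have yl: "(y (n-1))^2 \<le> M * S / (phi - eps)^2"
    using phi by (simp add: M_def field_simps)
  \<comment> \<open>w: backward stable component\<close>
  define w where "w i = Y (Suc i) - r * Y i" for i
  have w_rec: "\<And>i. 1 \<le> i \<Longrightarrow> i < n \<Longrightarrow> w (i-1) = r * w i + (- (r * \<Delta> * Y i))"
  proof -
    fix i assume "1 \<le> i" "i < n"
    then have "w i = l * Y i - Y (i-1) - r * Y i" using rec by (simp add: w_def)
    moreover have "w (i-1) = Y i - r * Y (i-1)" using \<open>1 \<le> i\<close> by (simp add: w_def)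
    ultimately have wi: "w i = \<Delta>*Y i + eps*Y i - Y (i-1)" and "w (i-1) = Y i - r * Y (i-1)"
      by (simp_all add: l_eq algebra_simps)
    have "r * w i = r*\<Delta>*Y i + (r*eps)*Y i - r*Y (i-1)" unfolding wi by (simp add: algebra_simps)
    note this \<open>w (i-1) = Y i - r * Y (i-1)\<close>
    then show "w (i-1) = r * w i + (- (r * \<Delta> * Y i))"
      using reps by simp
  qed
  have wsum: "(\<Sum>i\<le>n-1. (w i)^2) \<le> ((w (n-1))^2 + (\<Sum>i<n-1. K*r^2*\<Delta>^2*(Y (Suc i))^2)) / (1 - \<rho>)"
  proof (rule bwd_sum[OF \<rho>0 \<rho>1])
    fix i assume "i < n - 1"
    have "(w i)^2 = (r * w (Suc i) + (- (r * \<Delta> * Y (Suc i))))^2" using w_rec[of "Suc i"] \<open>i < n-1\<close> by simp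
    also have "\<dots> \<le> \<rho> * (w (Suc i))^2 + K * (- (r * \<Delta> * Y (Suc i)))^2"
      unfolding \<rho>_def K_def by (rule sq_ineq[OF r2])
    finally show "(w i)^2 \<le> \<rho> * (w (Suc i))^2 + K*r^2*\<Delta>^2*(Y (Suc i))^2"
      by (simp add: power_mult_distrib)
  qed
  have "(\<Sum>i<n-1. K*r^2*\<Delta>^2*(Y (Suc i))^2) = K*r^2*\<Delta>^2 * (\<Sum>i<n-1. (Y (Suc i))^2)"
    by (simp add: sum_distrib_left)
  moreover have "(\<Sum>i<n-1. (Y (Suc i))^2) \<le> S"
  proof -
    have "(\<Sum>i<n-1. (Y (Suc i))^2) = (\<Sum>i\<in>Suc ` {..<n-1}. (Y i)^2)" by (simp add: sum.reindex)
    also have "\<dots> = (\<Sum>i\<in>Suc ` {..<n-1}. (y i)^2)" by (rule sum.cong) (auto simp: Yi)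
    also have "\<dots> \<le> S" unfolding S_def by (rule sum_mono2) auto
    finally show ?thesis .
  qed
  ultimately have "(\<Sum>i<n-1. K*r^2*\<Delta>^2*(Y (Suc i))^2) \<le> K*r^2*\<Delta>^2 * S"
    using K0 by (simp add: mult_left_mono)
  moreover have "w (n-1) = (phi - r) * y (n-1)" using n Yn Yi by (simp add: w_def algebra_simps)
  ultimately have wsum2: "(\<Sum>i\<le>n-1. (w i)^2) \<le> ((phi - r)^2 * (y (n-1))^2 + K*r^2*\<Delta>^2 * S) / (1 - \<rho>)"
    using wsum \<rho>1 by (smt (verit) divide_right_mono power_mult_distrib)
  define e where "e i = Y i - Y 0 * r^i" for i
  have esum: "(\<Sum>i\<le>n-1. (e i)^2) \<le> ((e 0)^2 + (\<Sum>i<n-1. K * (w i)^2)) / (1 - \<rho>)"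
  proof (rule fwd_sum[OF \<rho>0 \<rho>1])
    fix i assume "i < n-1"
    have "e (Suc i) = r * e i + w i" by (simp add: e_def w_def algebra_simps)
    then have "(e (Suc i))^2 = (r * e i + w i)^2" by simp
    also have "\<dots> \<le> \<rho> * (e i)^2 + K * (w i)^2"
      unfolding \<rho>_def K_def by (rule sq_ineq[OF r2])
    finally show "(e (Suc i))^2 \<le> \<rho> * (e i)^2 + K * (w i)^2" .
  qed
  have "(\<Sum>i<n-1. K * (w i)^2) \<le> K * (\<Sum>i\<le>n-1. (w i)^2)"
  proof -
    have "(\<Sum>i<n-1. (w i)^2) \<le> (\<Sum>i\<le>n-1. (w i)^2)" by (rule sum_mono2) auto
    then show ?thesis using K0 by (simp add: sum_distrib_left[symmetric] mult_left_mono)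
  qed
  also have "\<dots> \<le> K * (((phi - r)^2 * (y (n-1))^2 + K*r^2*\<Delta>^2 * S) / (1 - \<rho>))"
    using wsum2 K0 by (rule mult_left_mono)
  also have "\<dots> \<le> K * (((phi - r)^2 * (M * S / (phi - eps)^2) + K*r^2*\<Delta>^2 * S) / (1 - \<rho>))"
  proof -
    have "(phi - r)^2 * (y (n-1))^2 \<le> (phi - r)^2 * (M * S / (phi - eps)^2)"
      using yl by (rule mult_left_mono) simp
    then have "((phi - r)^2 * (y (n-1))^2 + K*r^2*\<Delta>^2 * S) / (1 - \<rho>) \<le> ((phi - r)^2 * (M * S / (phi - eps)^2) + K*r^2*\<Delta>^2 * S) / (1 - \<rho>)"
      using \<rho>1 by (intro divide_right_mono) auto
    then show ?thesis using K0 by (rule mult_left_mono)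
  qed
  finally have ws: "(\<Sum>i<n-1. K * (w i)^2) \<le> K * (((phi - r)^2 * (M * S / (phi - eps)^2) + K*r^2*\<Delta>^2 * S) / (1 - \<rho>))" .
  have "(\<Sum>i<n. (y i - y 0 * r^i)^2) = (\<Sum>i\<le>n-1. (e i)^2)"
  proof -
    have "{..<n} = {..n-1}" using n by auto
    have "\<And>i. i \<in> {..n-1} \<Longrightarrow> (y i - y 0 * r^i)^2 = (e i)^2"
    proof -
      fix i assume "i \<in> {..n-1}"
      then have "i < n" using n by auto
      then show "(y i - y 0 * r^i)^2 = (e i)^2" using Yi[of i] Yi[of 0] n by (simp add: e_def)
    qed
    then show ?thesis unfolding \<open>{..<n} = {..n-1}\<close> by (rule sum.cong[OF refl])
  qed
  also have "\<dots> \<le> ((e 0)^2 + (\<Sum>i<n-1. K * (w i)^2)) / (1 - \<rho>)" by (rule esum)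
  also have "\<dots> \<le> (K * (((phi - r)^2 * (M * S / (phi - eps)^2) + K*r^2*\<Delta>^2 * S) / (1 - \<rho>))) / (1 - \<rho>)"
    using ws \<rho>1 by (intro divide_right_mono) (auto simp: e_def)
  also have "\<dots> = K/(1-\<rho>)^2 * ((phi-r)^2 * (M/(phi-eps)^2) + K*r^2*\<Delta>^2) * S"
  proof -
    have "1 - \<rho> \<noteq> 0" "phi - eps \<noteq> 0" using \<rho>1 phi by auto
    then show ?thesis by (simp add: field_simps) (rule disjI2, simp add: power2_eq_square algebra_simps)
  qed
  finally show ?thesis unfolding r_def \<rho>_def K_def M_def \<Delta>_def S_def .
qed

lemma T_dims: "dim_row (T_mat n eps phi) = n" "dim_col (T_mat n eps phi) = n"
  "T_mat n eps phi \<in> carrier_mat n n"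
  by (auto simp: T_mat_def)

lemma T_sym: "transpose_mat (T_mat n eps phi) = T_mat n eps phi"
  by (rule eq_matI) (auto simp: T_mat_def)

lemma T_row:
  assumes n: "n \<ge> 2" and i: "i < n" and x: "dim_vec x = n"
  shows "(T_mat n eps phi *\<^sub>v x) $ i =
    (if i = 0 then eps else if i = n-1 then phi else 0) * x $ i
    + (if 0 < i then x $ (i-1) else 0) + (if i+1 < n then x $ (i+1) else 0)"
proof -
  let ?d = "if i = 0 then eps else if i = n-1 then phi else 0"
  have "(T_mat n eps phi *\<^sub>v x) $ i = (\<Sum>j<n. T_mat n eps phi $$ (i,j) * x $ j)"
    using i x by (simp add: T_dims scalar_prod_def lessThan_atLeast0)
  also have "\<dots> = (\<Sum>j<n. (if j = i then ?d * x $ i else 0)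
      + (if j = i - 1 \<and> 0 < i then x $ j else 0) + (if j = i + 1 then x $ j else 0))"
    by (rule sum.cong) (use i in \<open>auto simp: T_mat_def\<close>)
  also have "\<dots> = ?d * x $ i + (if 0 < i then x $ (i-1) else 0) + (if i+1 < n then x $ (i+1) else 0)"
    using i by (simp add: sum.distrib)
  finally show ?thesis .
qed

lemma T_eigen_rec:
  assumes n: "n \<ge> 2" and ev: "eigenvector (T_mat n eps phi) x l"
  shows "dim_vec x = n"
    and "eps * x $ 0 + x $ 1 = l * x $ 0"
    and "\<And>i. i + 2 < n \<Longrightarrow> x $ i + x $ (i+2) = l * x $ (Suc i)"
    and "x $ (n-2) + phi * x $ (n-1) = l * x $ (n-1)"
proof -
  have dx: "dim_vec x = n" using ev by (auto simp: eigenvector_def T_dims)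
  have eq: "\<And>i. i < n \<Longrightarrow> (T_mat n eps phi *\<^sub>v x) $ i = l * x $ i"
    using ev dx by (simp add: eigenvector_def)
  show "dim_vec x = n" by (fact dx)
  show "eps * x $ 0 + x $ 1 = l * x $ 0"
    using eq[of 0] T_row[OF n _ dx, of 0 eps phi] n by simp
  show "x $ i + x $ (i+2) = l * x $ (Suc i)" if "i + 2 < n" for i
  proof -
    have "Suc i \<noteq> n - Suc 0" using that by arith
    then show ?thesis using eq[of "Suc i"] T_row[OF n _ dx, of "Suc i" eps phi] that by (simp add: algebra_simps)
  qed
  show "x $ (n-2) + phi * x $ (n-1) = l * x $ (n-1)"
  proof -
    have "n - 1 - 1 = n - 2" by simp
    then show ?thesis using eq[of "n-1"] T_row[OF n _ dx, of "n-1" eps phi] n by (simp add: algebra_simps)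
  qed
qed

lemma sum_sq_expand:
  fixes a b :: "nat \<Rightarrow> real"
  shows "(\<Sum>i<n. (p * a i - q * b i)^2) = p^2 * (\<Sum>i<n. (a i)^2) - 2*p*q*(\<Sum>i<n. a i * b i) + q^2 * (\<Sum>i<n. (b i)^2)"
proof -
  have "(\<Sum>i<n. (p * a i - q * b i)^2) = (\<Sum>i<n. p^2 * (a i)^2 - 2*p*q*(a i * b i) + q^2 * (b i)^2)"
    by (rule sum.cong) (auto simp: power2_eq_square algebra_simps)
  also have "\<dots> = p^2 * (\<Sum>i<n. (a i)^2) - 2*p*q*(\<Sum>i<n. a i * b i) + q^2 * (\<Sum>i<n. (b i)^2)"
    by (simp add: sum.distrib sum_subtractf sum_distrib_left)
  finally show ?thesis .
qed

lemma separation: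
  fixes x y v :: "nat \<Rightarrow> real"
  assumes xy: "(\<Sum>i<n. x i * y i) = 0" and xx: "(\<Sum>i<n. (x i)^2) = 1" and yy: "(\<Sum>i<n. (y i)^2) > 0"
    and ex: "(\<Sum>i<n. (x i - x 0 * v i)^2) \<le> \<eta>"
    and ey: "(\<Sum>i<n. (y i - y 0 * v i)^2) \<le> \<eta> * (\<Sum>i<n. (y i)^2)"
    and \<eta>: "\<eta> < 1/2"
  shows False
proof -
  define Sy where "Sy = (\<Sum>i<n. (y i)^2)"
  have "0 \<le> (\<Sum>i<n. (x i - x 0 * v i)^2)" by (intro sum_nonneg) auto
  then have \<eta>0: "0 \<le> \<eta>" using ex by linarith
  have "(\<Sum>i<n. (x 0 * y i - y 0 * x i)^2) = x 0^2 * Sy + y 0^2"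
    using sum_sq_expand[of "x 0" y "y 0" x n] xy xx by (simp add: Sy_def mult.commute)
  moreover have "(\<Sum>i<n. (x 0 * y i - y 0 * x i)^2) \<le>
      (\<Sum>i<n. 2 * x 0^2 * (y i - y 0 * v i)^2 + 2 * y 0^2 * (x i - x 0 * v i)^2)"
  proof (rule sum_mono)
    fix i
    have "x 0 * y i - y 0 * x i = x 0 * (y i - y 0 * v i) - y 0 * (x i - x 0 * v i)"
      by (simp add: algebra_simps)
    moreover have "\<And>P Q :: real. (P - Q)^2 \<le> 2*P^2 + 2*Q^2"
    proof -
      fix P Q :: real
      have "2*P^2 + 2*Q^2 - (P-Q)^2 = (P+Q)^2" by (simp add: power2_eq_square algebra_simps)
      moreover have "0 \<le> (P+Q)^2" by simp
      ultimately show "(P - Q)^2 \<le> 2*P^2 + 2*Q^2" by linarith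
    qed
    ultimately show "(x 0 * y i - y 0 * x i)^2 \<le> 2 * x 0^2 * (y i - y 0 * v i)^2 + 2 * y 0^2 * (x i - x 0 * v i)^2"
    proof -
      note h = \<open>\<And>P Q. (P - Q)^2 \<le> 2*P^2 + 2*Q^2\<close>[of "x 0 * (y i - y 0 * v i)" "y 0 * (x i - x 0 * v i)"]
      show ?thesis unfolding \<open>x 0 * y i - y 0 * x i = _\<close> using h by (simp add: power_mult_distrib mult.assoc)
    qed
  qed
  moreover have "(\<Sum>i<n. 2 * x 0^2 * (y i - y 0 * v i)^2 + 2 * y 0^2 * (x i - x 0 * v i)^2)
      = 2 * x 0^2 * (\<Sum>i<n. (y i - y 0 * v i)^2) + 2 * y 0^2 * (\<Sum>i<n. (x i - x 0 * v i)^2)"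
    by (simp add: sum.distrib sum_distrib_left)
  moreover have "2 * x 0^2 * (\<Sum>i<n. (y i - y 0 * v i)^2) \<le> 2 * x 0^2 * (\<eta> * Sy)"
    using ey by (intro mult_left_mono) (auto simp: Sy_def)
  moreover have "2 * y 0^2 * (\<Sum>i<n. (x i - x 0 * v i)^2) \<le> 2 * y 0^2 * \<eta>"
    using ex by (intro mult_left_mono) auto
  ultimately have Q: "x 0^2 * Sy + y 0^2 \<le> 2*\<eta> * (x 0^2 * Sy + y 0^2)"
    by (simp add: algebra_simps)
  have Sy0: "Sy > 0" using yy by (simp add: Sy_def)
  have "0 \<le> x 0^2 * Sy" using Sy0 by simp
  define Qv where "Qv = x 0^2 * Sy + y 0^2"
  have Qv0: "0 \<le> Qv" using \<open>0 \<le> x 0^2 * Sy\<close> by (simp add: Qv_def)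
  have "(1 - 2*\<eta>) * Qv \<le> 0" using Q by (simp add: Qv_def algebra_simps)
  moreover have "1 - 2*\<eta> > 0" using \<eta> by simp
  ultimately have "Qv \<le> 0" by (simp add: mult_le_0_iff)
  then have "y 0^2 \<le> 0" using \<open>0 \<le> x 0^2 * Sy\<close> unfolding Qv_def by linarith
  then have "y 0 = 0" by simp
  then have "Sy \<le> \<eta> * Sy" using ey by (simp add: Sy_def)
  moreover have "\<eta> * Sy < 1 * Sy" using Sy0 \<eta> by (intro mult_strict_right_mono) auto
  ultimately show False by simp
qed

lemma proj_bound:
  fixes x v :: "real vec"
  assumes dx: "dim_vec x = n" and dv: "dim_vec v = n" and vv: "v \<bullet> v > 0"
  shows "(vnorm2 (x - proj_onto v x))^2 \<le> (\<Sum>i<n. (x $ i - t * v $ i)^2)"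
proof -
  define P where "P = (\<Sum>i<n. x $ i * v $ i)"
  define V where "V = (\<Sum>i<n. v $ i * v $ i)"
  define c where "c = P / V"
  have VV: "V = v \<bullet> v" using dv by (simp add: V_def scalar_prod_def lessThan_atLeast0)
  have V0: "V > 0" using vv VV by simp
  have PV: "P = c * V" using V0 by (simp add: c_def)
  have pr: "proj_onto v x = c \<cdot>\<^sub>v v"
    unfolding proj_onto_def c_def P_def V_def using dx dv by (simp add: scalar_prod_def lessThan_atLeast0)
  have zz: "(x - proj_onto v x) \<bullet> (x - proj_onto v x) = (\<Sum>i<n. (x $ i - c * v $ i)^2)"
    unfolding pr using dx dv by (simp add: scalar_prod_def lessThan_atLeast0 power2_eq_square)
  have nn: "0 \<le> (x - proj_onto v x) \<bullet> (x - proj_onto v x)" unfolding zz by (intro sum_nonneg) auto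
  have "(vnorm2 (x - proj_onto v x))^2 = (\<Sum>i<n. (x $ i - c * v $ i)^2)"
    unfolding vnorm2_def using nn zz by simp
  also have "\<dots> = (\<Sum>i<n. (x$i)^2) - 2*c*P + c^2 * V"
    using sum_sq_expand[of 1 "\<lambda>i. x$i" c "\<lambda>i. v$i" n] by (simp add: P_def V_def power2_eq_square)
  also have "\<dots> \<le> (\<Sum>i<n. (x$i)^2) - 2*t*P + t^2 * V"
  proof -
    have "0 \<le> V * (t - c)^2" using V0 by simp
    then show ?thesis unfolding PV by (simp add: power2_eq_square algebra_simps)
  qed
  also have "\<dots> = (\<Sum>i<n. (x $ i - t * v $ i)^2)"
    using sum_sq_expand[of 1 "\<lambda>i. x$i" t "\<lambda>i. v$i" n] by (simp add: P_def V_def power2_eq_square)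
  finally show ?thesis .
qed

lemma alg_id:
  fixes A B C P E D F G H X :: real
  shows "A/B * (C * ((P + E*D/F)/G) + H*D) * X = (A/B*C/G * P + A/B*(C*(E/F)/G + H)*D) * X"
  by (simp add: add_divide_distrib divide_inverse algebra_simps)

lemma key2:
  fixes eps phi :: real
  assumes eps: "\<bar>eps\<bar> > 1" and phi: "phi \<noteq> eps"
  shows "\<exists>\<alpha> \<beta> \<rho>. 0 \<le> \<alpha> \<and> 0 \<le> \<beta> \<and> 0 \<le> \<rho> \<and> \<rho> < 1 \<and>
    (\<forall>n l x. n \<ge> 2 \<longrightarrow> eigenvector (T_mat n eps phi) x l \<longrightarrow>
      (\<Sum>i<n. (x$i - x$0 * (1/eps)^i)^2) \<le> (\<alpha> * \<rho>^(n-1) * (l - 2*eps)^2 + \<beta> * (l - (eps + 1/eps))^2) * (\<Sum>i<n. (x$i)^2))"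
proof -
  define r where "r = 1/eps"
  define \<rho> where "\<rho> = (1 + r^2)/2"
  define K where "K = (1+r^2)/(1-r^2)"
  define \<alpha> where "\<alpha> = K/(1-\<rho>)^2 * (phi-r)^2 / (phi-eps)^2"
  define \<beta> where "\<beta> = K/(1-\<rho>)^2 * ((phi-r)^2 * (K/(1-\<rho>)) / (phi-eps)^2 + K * r^2)"
  have epsnz: "eps \<noteq> 0" using eps by auto
  have r2: "r^2 < 1"
  proof -
    have "\<bar>r\<bar> < 1" using eps by (simp add: r_def abs_divide divide_less_eq)
    then have "\<bar>r\<bar>^2 < 1" by (simp add: abs_square_less_1)
    then show ?thesis by simp
  qed
  have \<rho>0: "0 \<le> \<rho>" and \<rho>1: "\<rho> < 1" using r2 by (auto simp: \<rho>_def)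
  have K0: "0 \<le> K" using r2 by (simp add: K_def)
  have a0: "0 \<le> \<alpha>" using K0 by (simp add: \<alpha>_def)
  have b0: "0 \<le> \<beta>" using K0 \<rho>1 by (simp add: \<beta>_def)
  have main: "(\<Sum>i<n. (x$i - x$0 * (1/eps)^i)^2) \<le> (\<alpha> * \<rho>^(n-1) * (l - 2*eps)^2 + \<beta> * (l - (eps + 1/eps))^2) * (\<Sum>i<n. (x$i)^2)"
    if n: "n \<ge> 2" and ev: "eigenvector (T_mat n eps phi) x l" for n l x
  proof -
    note R = T_eigen_rec[OF n ev]
    have "(\<Sum>i<n. (x$i - x$0 * (1/eps)^i)^2) \<le>
     (1+(1/eps)^2)/(1-(1/eps)^2)/(1-(1+(1/eps)^2)/2)^2 * ((phi-1/eps)^2 *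
       ((((1+(1/eps)^2)/2)^(n-1)*(l-2*eps)^2 + (1+(1/eps)^2)/(1-(1/eps)^2)*(l - (eps + 1/eps))^2/(1-(1+(1/eps)^2)/2))/(phi-eps)^2)
      + (1+(1/eps)^2)/(1-(1/eps)^2)*(1/eps)^2*(l - (eps + 1/eps))^2) * (\<Sum>i<n. (x$i)^2)"
      by (rule key_fixed[OF eps phi n, of "\<lambda>i. x$i" l]) (use R in auto)
    also have "\<dots> = (\<alpha> * \<rho>^(n-1) * (l - 2*eps)^2 + \<beta> * (l - (eps + 1/eps))^2) * (\<Sum>i<n. (x$i)^2)"
    proof -
      have "1 - \<rho> \<noteq> 0" "phi - eps \<noteq> 0" using \<rho>1 phi by auto
      then show ?thesis unfolding \<alpha>_def \<beta>_def K_def[symmetric] \<rho>_def[symmetric] r_def[symmetric]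
        using alg_id[of K "(1-\<rho>)^2" "(phi-r)^2" "\<rho>^(n-1)*(l-2*eps)^2" K "(l-(eps+r))^2" "1-\<rho>" "(phi-eps)^2" "K*r^2" "\<Sum>i<n. (x$i)^2"]
        by (simp only: mult.assoc)
    qed
    finally show ?thesis .
  qed
  show ?thesis using a0 b0 \<rho>0 \<rho>1 main by blast
qed

lemma dot_nn: "0 \<le> (z :: real vec) \<bullet> z"
  unfolding scalar_prod_def by (intro sum_nonneg) auto

lemma dot_sq: "dim_vec (z :: real vec) = n \<Longrightarrow> z \<bullet> z = (\<Sum>i<n. (z$i)^2)"
  unfolding scalar_prod_def lessThan_atLeast0 by (rule sum.cong) (auto intro: power2_eq_square[symmetric])

lemma eig_orth:
  assumes ex: "eigenvector (T_mat n eps phi) x m" and ey: "eigenvector (T_mat n eps phi) y l" and ne: "l \<noteq> m"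
  shows "(\<Sum>i<n. x$i * y$i) = 0"
proof -
  have x: "x \<in> carrier_vec n" and y: "y \<in> carrier_vec n"
    and Tx: "T_mat n eps phi *\<^sub>v x = m \<cdot>\<^sub>v x" and Ty: "T_mat n eps phi *\<^sub>v y = l \<cdot>\<^sub>v y"
    using ex ey by (auto simp: eigenvector_def T_dims)
  have "(transpose_mat (T_mat n eps phi) *\<^sub>v y) \<bullet> x = y \<bullet> (T_mat n eps phi *\<^sub>v x)"
    by (rule transpose_vec_mult_scalar[OF T_dims(3) x y])
  then have "l * (y \<bullet> x) = m * (y \<bullet> x)" using x y unfolding T_sym Ty Tx by simp
  then have "y \<bullet> x = 0" using ne by simp
  then show ?thesis using x by (simp add: scalar_prod_def lessThan_atLeast0 mult.commute)
qed

theorem theorem3p2: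
  fixes eps phi :: real and \<mu> :: "nat \<Rightarrow> real" and x :: "nat \<Rightarrow> real vec"
  assumes eps: "\<bar>eps\<bar> > 1" and phi: "phi \<noteq> eps"
    and eigpair: "\<And>n. n \<ge> 2 \<Longrightarrow> eigenvector (T_mat n eps phi) (x n) (\<mu> n)"
    and unit: "\<And>n. n \<ge> 2 \<Longrightarrow> vnorm2 (x n) = 1"
    and lim: "\<mu> \<longlonglongrightarrow> eps + 1 / eps"
  shows "((\<forall>\<^sub>F n in sequentially. outlier (T_mat n eps phi) (\<mu> n))
       \<and> (\<exists>c > 0. \<forall>\<^sub>F n in sequentially. \<forall>l. eigenvalue (T_mat n eps phi) l \<and> l \<noteq> \<mu> n
              \<longrightarrow> \<bar>l - (eps + 1 / eps)\<bar> \<ge> c))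
       \<and> ((\<lambda>n. vnorm2 (x n - proj_onto (v_vec n eps) (x n))) \<longlonglongrightarrow> 0)"
proof -
  obtain \<alpha> \<beta> \<rho> where a0: "0 \<le> \<alpha>" and b0: "0 \<le> \<beta>" and \<rho>0: "0 \<le> \<rho>" and \<rho>1: "\<rho> < 1"
    and B: "\<And>n l y. n \<ge> 2 \<Longrightarrow> eigenvector (T_mat n eps phi) y l \<Longrightarrow>
      (\<Sum>i<n. (y$i - y$0 * (1/eps)^i)^2) \<le> (\<alpha> * \<rho>^(n-1) * (l - 2*eps)^2 + \<beta> * (l - (eps + 1/eps))^2) * (\<Sum>i<n. (y$i)^2)"
    using key2[OF eps phi] by blast
  define a where "a = eps + 1/eps"
  have epsnz: "eps \<noteq> 0" using eps by auto
  have a2: "\<bar>a\<bar> > 2"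
  proof -
    have "a^2 - 4 = (eps - 1/eps)^2" using epsnz by (simp add: a_def power2_eq_square field_simps)
    moreover have "eps - 1/eps \<noteq> 0"
    proof
      assume "eps - 1/eps = 0"
      then have "eps * eps = 1" using epsnz by (simp add: field_simps)
      then have "\<bar>eps\<bar> * \<bar>eps\<bar> = 1" by (metis abs_mult abs_one)
      moreover have "\<bar>eps\<bar> * \<bar>eps\<bar> > 1 * 1" using eps by (intro mult_strict_mono) auto
      ultimately show False by simp
    qed
    ultimately have "a^2 - 4 > 0" by (metis zero_less_power2)
    then have "a^2 > 2^2" by simp
    then show ?thesis using abs_le_square_iff[of a 2] by linarith
  qed
  have xdim: "\<And>n. n \<ge> 2 \<Longrightarrow> dim_vec (x n) = n" using eigpair by (auto simp: eigenvector_def T_dims)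
  have xsum: "\<And>n. n \<ge> 2 \<Longrightarrow> (\<Sum>i<n. (x n $ i)^2) = 1"
  proof -
    fix n :: nat assume n: "n \<ge> 2"
    have "sqrt (x n \<bullet> x n) = 1" using unit[OF n] by (simp add: vnorm2_def)
    then have "x n \<bullet> x n = 1" by simp
    then show "(\<Sum>i<n. (x n $ i)^2) = 1" using dot_sq[OF xdim[OF n]] by simp
  qed
  have vv: "\<And>n. n \<ge> 2 \<Longrightarrow> v_vec n eps \<bullet> v_vec n eps > 0"
  proof -
    fix n :: nat assume n: "n \<ge> 2"
    have "v_vec n eps \<bullet> v_vec n eps = (\<Sum>i<n. ((1/eps)^i)^2)"
      using dot_sq[of "v_vec n eps" n] by (simp add: v_vec_def)
    moreover have "((1/eps)^0)^2 \<le> (\<Sum>i<n. ((1/eps)^i)^2)"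
      using n by (intro member_le_sum) auto
    ultimately show "v_vec n eps \<bullet> v_vec n eps > 0" by simp
  qed
  define g where "g n = \<alpha> * \<rho>^(n-1) * (\<mu> n - 2*eps)^2 + \<beta> * (\<mu> n - a)^2" for n
  have P2: "(vnorm2 (x n - proj_onto (v_vec n eps) (x n)))^2 \<le> g n" if n: "n \<ge> 2" for n
  proof -
    have "(vnorm2 (x n - proj_onto (v_vec n eps) (x n)))^2 \<le> (\<Sum>i<n. (x n $ i - x n $ 0 * v_vec n eps $ i)^2)"
      by (rule proj_bound[OF xdim[OF n] _ vv[OF n]]) (simp add: v_vec_def)
    also have "\<dots> = (\<Sum>i<n. (x n $ i - x n $ 0 * (1/eps)^i)^2)"
      by (rule sum.cong) (auto simp: v_vec_def)
    also have "\<dots> \<le> g n" using B[OF n eigpair[OF n]] xsum[OF n] by (simp add: g_def a_def)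
    finally show ?thesis .
  qed
  have rho_lim: "(\<lambda>n. \<rho>^(n-1)) \<longlonglongrightarrow> 0"
    by (rule LIMSEQ_offset[where k=1]) (simp add: LIMSEQ_power_zero \<rho>0 \<rho>1)
  have mu_lim: "\<mu> \<longlonglongrightarrow> a" using lim by (simp add: a_def)
  have g_lim: "g \<longlonglongrightarrow> 0"
  proof -
    have "g \<longlonglongrightarrow> \<alpha> * 0 * (a - 2*eps)^2 + \<beta> * (a - a)^2"
      unfolding g_def by (intro tendsto_intros rho_lim mu_lim)
    then show ?thesis by simp
  qed
  have part2: "(\<lambda>n. vnorm2 (x n - proj_onto (v_vec n eps) (x n))) \<longlonglongrightarrow> 0"
  proof (rule tendsto_sandwich[where f="\<lambda>_. 0" and h="\<lambda>n. sqrt (g n)"])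
    show "\<forall>\<^sub>F n in sequentially. 0 \<le> vnorm2 (x n - proj_onto (v_vec n eps) (x n))"
      by (simp add: vnorm2_def dot_nn)
    show "\<forall>\<^sub>F n in sequentially. vnorm2 (x n - proj_onto (v_vec n eps) (x n)) \<le> sqrt (g n)"
      using eventually_ge_at_top[of 2] by eventually_elim (use P2 in \<open>auto intro: real_le_rsqrt\<close>)
    show "(\<lambda>_. 0) \<longlonglongrightarrow> (0::real)" by simp
    show "(\<lambda>n. sqrt (g n)) \<longlonglongrightarrow> 0" using tendsto_real_sqrt[OF g_lim] by simp
  qed
  have part1a: "\<forall>\<^sub>F n in sequentially. outlier (T_mat n eps phi) (\<mu> n)"
  proof -
    have "\<forall>\<^sub>F n in sequentially. dist (\<mu> n) a < \<bar>a\<bar> - 2"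
      using tendstoD[OF mu_lim] a2 by simp
    then show ?thesis using eventually_ge_at_top[of 2]
    proof eventually_elim
      case (elim n)
      have "\<bar>\<mu> n\<bar> > 2" using elim(1) by (simp add: dist_real_def)
      then show ?case using eigpair[OF elim(2)] by (auto simp: outlier_def eigenvalue_def)
    qed
  qed
  define L where "L = (1 + \<bar>a - 2*eps\<bar>)^2"
  define c where "c = min 1 (1 / (4 * (\<beta> + 1)))"
  have c0: "c > 0" using b0 by (simp add: c_def)
  have c1: "c \<le> 1" by (simp add: c_def)
  have bc: "\<beta> * c^2 < 1/4"
  proof -
    have "\<beta> * c^2 \<le> \<beta> * c" using c0 c1 b0 by (intro mult_left_mono) (auto simp: power2_eq_square)
    also have "\<dots> \<le> \<beta> * (1 / (4 * (\<beta> + 1)))" using b0 by (intro mult_left_mono) (auto simp: c_def)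
    also have "\<dots> < 1/4" using b0 by (simp add: field_simps)
    finally show ?thesis .
  qed
  have bound_any: "(\<Sum>i<n. (z$i - z$0 * (1/eps)^i)^2) \<le> (\<alpha> * L * \<rho>^(n-1) + \<beta> * c^2) * (\<Sum>i<n. (z$i)^2)"
    if n: "n \<ge> 2" and ez: "eigenvector (T_mat n eps phi) z m" and mc: "\<bar>m - a\<bar> < c" for n z m
  proof -
    have S0: "0 \<le> (\<Sum>i<n. (z$i)^2)" by (intro sum_nonneg) auto
    have "\<bar>m - 2*eps\<bar> \<le> 1 + \<bar>a - 2*eps\<bar>" using mc c1 by linarith
    then have "(m - 2*eps)^2 \<le> L" unfolding L_def by (metis abs_ge_zero power2_abs power_mono)
    then have t1: "\<alpha> * \<rho>^(n-1) * (m - 2*eps)^2 \<le> \<alpha> * L * \<rho>^(n-1)"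
    proof -
      have "(\<alpha> * \<rho>^(n-1)) * (m - 2*eps)^2 \<le> (\<alpha> * \<rho>^(n-1)) * L"
        using a0 \<rho>0 \<open>(m - 2*eps)^2 \<le> L\<close> by (intro mult_left_mono) auto
      then show ?thesis by (simp add: ac_simps)
    qed
    have "(m - a)^2 \<le> c^2" using mc by (metis abs_ge_zero power2_abs power_mono less_imp_le)
    then have t2: "\<beta> * (m - a)^2 \<le> \<beta> * c^2" using b0 by (rule mult_left_mono)
    have "(\<Sum>i<n. (z$i - z$0 * (1/eps)^i)^2) \<le> (\<alpha> * \<rho>^(n-1) * (m - 2*eps)^2 + \<beta> * (m - a)^2) * (\<Sum>i<n. (z$i)^2)"
      using B[OF n ez] by (simp add: a_def)
    also have "\<dots> \<le> (\<alpha> * L * \<rho>^(n-1) + \<beta> * c^2) * (\<Sum>i<n. (z$i)^2)"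
      using t1 t2 S0 by (intro mult_right_mono) auto
    finally show ?thesis .
  qed
  have part1b: "\<forall>\<^sub>F n in sequentially. \<forall>l. eigenvalue (T_mat n eps phi) l \<and> l \<noteq> \<mu> n
              \<longrightarrow> \<bar>l - (eps + 1 / eps)\<bar> \<ge> c"
  proof -
    have ev1: "\<forall>\<^sub>F n in sequentially. dist (\<mu> n) a < c" using tendstoD[OF mu_lim c0] .
    have "(\<lambda>n. \<alpha> * L * \<rho>^(n-1)) \<longlonglongrightarrow> \<alpha> * L * 0" by (intro tendsto_intros rho_lim)
    then have ev2: "\<forall>\<^sub>F n in sequentially. \<alpha> * L * \<rho>^(n-1) < 1/4"
      by (rule order_tendstoD(2)) simp
    show ?thesis using ev1 ev2 eventually_ge_at_top[of 2]
    proof eventually_elim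
      case (elim n)
      have n: "n \<ge> 2" using elim by simp
      define \<eta> where "\<eta> = \<alpha> * L * \<rho>^(n-1) + \<beta> * c^2"
      have \<eta>: "\<eta> < 1/2" using elim(2) bc by (simp add: \<eta>_def)
      show ?case
      proof (intro allI impI)
        fix l assume "eigenvalue (T_mat n eps phi) l \<and> l \<noteq> \<mu> n"
        then obtain y where ey: "eigenvector (T_mat n eps phi) y l" and ne: "l \<noteq> \<mu> n"
          by (auto simp: eigenvalue_def)
        show "\<bar>l - (eps + 1 / eps)\<bar> \<ge> c"
        proof (rule ccontr)
          assume "\<not> \<bar>l - (eps + 1 / eps)\<bar> \<ge> c"
          then have lc: "\<bar>l - a\<bar> < c" by (simp add: a_def)
          have yd: "dim_vec y = n" and ynz: "y \<noteq> 0\<^sub>v n" using ey by (auto simp: eigenvector_def T_dims)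
          have Sy: "(\<Sum>i<n. (y$i)^2) > 0"
          proof (rule ccontr)
            assume "\<not> (\<Sum>i<n. (y$i)^2) > 0"
            moreover have "0 \<le> (\<Sum>i<n. (y$i)^2)" by (intro sum_nonneg) auto
            ultimately have "(\<Sum>i<n. (y$i)^2) = 0" by simp
            then have "\<forall>i\<in>{..<n}. (y$i)^2 = 0" by (subst (asm) sum_nonneg_eq_0_iff) auto
            then have "y = 0\<^sub>v n" using yd by (intro eq_vecI) auto
            then show False using ynz by simp
          qed
          have ex: "(\<Sum>i<n. (x n $ i - x n $ 0 * (1/eps)^i)^2) \<le> \<eta>"
            using bound_any[OF n eigpair[OF n], of] elim(1) xsum[OF n]
            by (simp add: \<eta>_def dist_real_def)
          have eyb: "(\<Sum>i<n. (y$i - y$0 * (1/eps)^i)^2) \<le> \<eta> * (\<Sum>i<n. (y$i)^2)"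
            using bound_any[OF n ey lc] by (simp add: \<eta>_def)
          have orth: "(\<Sum>i<n. x n $ i * y $ i) = 0"
            using eig_orth[OF eigpair[OF n] ey] ne by simp
          show False
            by (rule separation[where n=n and x="\<lambda>i. x n $ i" and y="\<lambda>i. y $ i" and v="\<lambda>i. (1/eps)^i" and \<eta>=\<eta>])
               (use orth xsum[OF n] Sy ex eyb \<eta> in auto)
        qed
      qed
    qed
  qed
  show ?thesis using part1a part1b part2 c0 by blast
qed

end
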